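(* Let $P=P(G,[\omega])$ be a toric poset and $i,j\in V$. If $I=[i,j]^{\mathrm{tor}}$, then there exists $\omega'\in[\omega]$ such that $I$ equals the interval $[i,j]=\{k\in V: i\le k\le j\}$ of the poset $P(G,\omega')$. The converse fails in general: for $G$ the path $1-2-3$ and $\omega$ the orientation $1\to2\to3$, the interval $[1,3]$ of $P(G,\omega)$ is $\{1,2,3\}$, whereas $[1,3]^{\mathrm{tor}}=\emptyset$ in $P(G,[\omega])$.
   Context: Toric poset setup: $V=[n]$; $\mathrm{Acyc}(G)$ acyclic orientations; $P(G,\omega)$ the poset on $V$ given by the transitive closure of $\omega$; $[\omega]$ the class under the equivalence generated by converting a source into a sink; toric chambers (components of $\mathbb{R}^V/\mathbb{Z}^V$ minus the hyperplanes $\{x_i\equiv x_j\bmod 1\}$, $\{i,j\}\in E$) correspond bijectively to classes $[\omega]$; $P(G,[\omega])$ is identified with its chamber $c(P)$. Toric chain: $C=\{i_1,\dots,i_m\}$ is a toric chain of $P$ if there is a cyclic class $[(i_1,\dots,i_m)]$ such that for every $x\in c(P)$ (coordinates in $[0,1)$) some cyclic shift $(j_1,\dots,j_m)$ has $0\le x_{j_1}<\dots<x_{j_m}<1$; write $P|_C=[(i_1,\dots,i_m)]$. Toric interval: $[i,i]^{\mathrm{tor}}=\{i\}$; for $i\ne j$, $[i,j]^{\mathrm{tor}}=\emptyset$ if $\{i,j\}$ is not a toric chain and otherwise $[i,j]^{\mathrm{tor}}=\{i,j\}\cup\{k: P|_{\{i,j,k\}}=[(i,k,j)]\}$. Ordinary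 interval $[i,j]$ is empty if $i\not\le j$. *)

theory Defs
  imports Main "HOL.Real"
begin

text \<open>Vertex set V = [n] = {1..n}. A simple graph is a set E of 2-element subsets of V.
  Orientations are relations on V (pairs (a,b) meaning the edge a -> b).\<close>

definition simple_graph :: "nat \<Rightarrow> nat set set \<Rightarrow> bool" where
  "simple_graph n E \<longleftrightarrow> (\<forall>e\<in>E. \<exists>a b. a \<noteq> b \<and> a \<in> {1..n} \<and> b \<in> {1..n} \<and> e = {a, b})"

definition is_orientation :: "nat \<Rightarrow> nat set set \<Rightarrow> (nat \<times> nat) set \<Rightarrow> bool" where
  "is_orientation n E \<omega> \<longleftrightarrow>
     (\<forall>(a,b)\<in>\<omega>. a \<noteq> b \<and> {a, b} \<in> E) \<and>
     (\<forall>a b. a \<noteq> b \<and> {a, b} \<in> E \<longrightarrow> ((a,b) \<in> \<omega> \<longleftrightarrow> (b,a) \<notin> \<omega>))"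

definition Acyc :: "nat \<Rightarrow> nat set set \<Rightarrow> (nat \<times> nat) set set" where
  "Acyc n E = {\<omega>. is_orientation n E \<omega> \<and> acyclic \<omega>}"

definition is_source :: "nat \<Rightarrow> (nat \<times> nat) set \<Rightarrow> nat \<Rightarrow> bool" where
  "is_source n \<omega> i \<longleftrightarrow> i \<in> {1..n} \<and> (\<forall>a. (a, i) \<notin> \<omega>)"

definition flip_at :: "(nat \<times> nat) set \<Rightarrow> nat \<Rightarrow> (nat \<times> nat) set" where
  "flip_at \<omega> i = {(a,b). (a,b) \<in> \<omega> \<and> a \<noteq> i} \<union> {(b,i) | b. (i,b) \<in> \<omega>}"

definition flip_step :: "nat \<Rightarrow> (nat \<times> nat) set \<Rightarrow> (nat \<times> nat) set \<Rightarrow> bool" where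
  "flip_step n \<omega> \<omega>' \<longleftrightarrow> (\<exists>i. is_source n \<omega> i \<and> \<omega>' = flip_at \<omega> i)"

definition tor_class :: "nat \<Rightarrow> (nat \<times> nat) set \<Rightarrow> (nat \<times> nat) set set" where
  "tor_class n \<omega> = {\<omega>'. (\<lambda>a b. flip_step n a b \<or> flip_step n b a)\<^sup>*\<^sup>* \<omega> \<omega>'}"

definition induced_orientation :: "nat set set \<Rightarrow> (nat \<Rightarrow> real) \<Rightarrow> (nat \<times> nat) set" where
  "induced_orientation E x = {(a,b). a \<noteq> b \<and> {a,b} \<in> E \<and> x a < x b}"

text \<open>Toric chamber c(P) of P(G,[\<omega>]), points represented by coordinates in [0,1):
  x lies in it iff it avoids the toric hyperplanes and its induced orientation is in [\<omega>].\<close>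
definition tor_chamber :: "nat \<Rightarrow> nat set set \<Rightarrow> (nat \<times> nat) set \<Rightarrow> (nat \<Rightarrow> real) set" where
  "tor_chamber n E \<omega> = {x. (\<forall>i\<in>{1..n}. 0 \<le> x i \<and> x i < 1) \<and>
      (\<forall>a b. a \<noteq> b \<and> {a,b} \<in> E \<longrightarrow> x a \<noteq> x b) \<and>
      induced_orientation E x \<in> tor_class n \<omega>}"

definition restricts_to :: "nat \<Rightarrow> nat set set \<Rightarrow> (nat \<times> nat) set \<Rightarrow> nat list \<Rightarrow> bool" where
  "restricts_to n E \<omega> cs \<longleftrightarrow> distinct cs \<and> set cs \<subseteq> {1..n} \<and>
     (\<forall>x\<in>tor_chamber n E \<omega>. \<exists>r. sorted_wrt (<) (map x (rotate r cs)) \<and>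
         (\<forall>k\<in>set cs. 0 \<le> x k \<and> x k < 1))"

definition toric_chain :: "nat \<Rightarrow> nat set set \<Rightarrow> (nat \<times> nat) set \<Rightarrow> nat set \<Rightarrow> bool" where
  "toric_chain n E \<omega> C \<longleftrightarrow> (\<exists>cs. set cs = C \<and> restricts_to n E \<omega> cs)"

definition tor_interval :: "nat \<Rightarrow> nat set set \<Rightarrow> (nat \<times> nat) set \<Rightarrow> nat \<Rightarrow> nat \<Rightarrow> nat set" where
  "tor_interval n E \<omega> i j =
     (if i = j then {i}
      else if \<not> toric_chain n E \<omega> {i, j} then {}
      else {i, j} \<union> {k. k \<in> {1..n} \<and> restricts_to n E \<omega> [i, k, j]})"

definition poset_interval :: "nat \<Rightarrow> (nat \<times> nat) set \<Rightarrow> nat \<Rightarrow> nat \<Rightarrow> nat set" where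
  "poset_interval n \<omega> i j = {k. k \<in> {1..n} \<and> (i,k) \<in> \<omega>\<^sup>* \<and> (k,j) \<in> \<omega>\<^sup>*}"

end

theory Submission
  imports Defs Complex_Main
begin


definition Zset :: "(nat \<times> nat) set \<Rightarrow> (nat \<Rightarrow> real) set" where
  "Zset w = {z. \<forall>(a,b)\<in>w. 0 < z b - z a \<and> z b - z a < 1}"

lemma edge_in:
  assumes "simple_graph n E" "is_orientation n E w" "(a,b) \<in> w"
  shows "a \<in> {1..n} \<and> b \<in> {1..n} \<and> a \<noteq> b \<and> {a,b} \<in> E"
proof -
  have ab: "a \<noteq> b" "{a,b} \<in> E" using assms(2,3) unfolding is_orientation_def by auto
  then obtain c d where "c \<in> {1..n}" "d \<in> {1..n}" "{a,b} = {c,d}"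
    using assms(1) unfolding simple_graph_def by blast
  then show ?thesis using ab by (auto simp: doubleton_eq_iff)
qed

lemma E_in:
  assumes "simple_graph n E" "{a,b} \<in> E"
  shows "a \<in> {1..n} \<and> b \<in> {1..n}"
proof -
  obtain c d where "c \<in> {1..n}" "d \<in> {1..n}" "{a,b} = {c,d}"
    using assms unfolding simple_graph_def by blast
  then show ?thesis by (auto simp: doubleton_eq_iff)
qed

lemma ind_orient:
  assumes "\<forall>a b. a \<noteq> b \<and> {a,b} \<in> E \<longrightarrow> y a \<noteq> y b"
  shows "is_orientation n E (induced_orientation E y)"
proof -
  have c: "{b,a} = {a,b}" for a b :: nat by blast
  have 1: "\<forall>(a,b)\<in>induced_orientation E y. a \<noteq> b \<and> {a, b} \<in> E"
    unfolding induced_orientation_def by blast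
  have 2: "((a, b) \<in> induced_orientation E y) = ((b, a) \<notin> induced_orientation E y)"
    if h: "a \<noteq> b" "{a, b} \<in> E" for a b
  proof -
    have "y a \<noteq> y b" using assms h by blast
    moreover have "{b,a} \<in> E" using h c[of a b] by simp
    ultimately show ?thesis using h unfolding induced_orientation_def by auto
  qed
  have 3: "\<forall>a b. a \<noteq> b \<and> {a, b} \<in> E \<longrightarrow>
      ((a, b) \<in> induced_orientation E y) = ((b, a) \<notin> induced_orientation E y)"
    by (intro allI impI, elim conjE, rule 2)
  show ?thesis unfolding is_orientation_def using 1 3 by (rule conjI)
qed

lemma ind_eq:
  assumes "is_orientation n E w" "\<forall>(a,b)\<in>w. z a < z b"
  shows "induced_orientation E z = w"
proof -
  { fix a b assume "(a,b) \<in> w"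
    then have "a \<noteq> b" "{a,b} \<in> E" "z a < z b" using assms unfolding is_orientation_def by auto }
  moreover
  { fix a b assume h: "a \<noteq> b" "{a,b} \<in> E" "z a < z b"
    have "(a,b) \<in> w"
    proof (rule ccontr)
      assume "(a,b) \<notin> w"
      then have "(b,a) \<in> w" using assms(1) h unfolding is_orientation_def by blast
      then show False using assms(2) h by auto
    qed }
  ultimately show ?thesis unfolding induced_orientation_def by auto
qed

lemma trancl_incr:
  assumes "\<forall>(a,b)\<in>w. z a < (z b::real)" "(a,b) \<in> w\<^sup>+"
  shows "z a < z b"
  using assms(2)
proof (induction rule: trancl_induct)
  case (base y) then show ?case using assms(1) by auto
next
  case (step y c) then show ?case using assms(1) by fastforce
qed

lemma acyclic_incr:
  assumes "\<forall>(a,b)\<in>w. z a < (z b::real)"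
  shows "acyclic w"
  unfolding acyclic_def using trancl_incr[OF assms] by blast

lemma class_sym:
  assumes "w' \<in> tor_class n w"
  shows "tor_class n w' = tor_class n w"
proof -
  let ?R = "\<lambda>a b. flip_step n a b \<or> flip_step n b a"
  have s: "symp ?R" unfolding symp_def by blast
  have "?R\<^sup>*\<^sup>* w w'" using assms unfolding tor_class_def by auto
  moreover have "?R\<^sup>*\<^sup>* w' w" using calculation symp_rtranclp[OF s] unfolding symp_def by blast
  ultimately show ?thesis unfolding tor_class_def
    by (auto intro: rtranclp_trans)
qed

lemma chamber_class:
  assumes "w' \<in> tor_class n w"
  shows "tor_chamber n E w' = tor_chamber n E w"
  unfolding tor_chamber_def using class_sym[OF assms] by simp

lemma class_refl: "w \<in> tor_class n w"
  unfolding tor_class_def by simp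

lemma restricts_inj:
  assumes "restricts_to n E w cs" "y \<in> tor_chamber n E w"
  shows "inj_on y (set cs)"
proof -
  obtain r where "sorted_wrt (<) (map y (rotate r cs))" using assms unfolding restricts_to_def by blast
  then have "distinct (map y (rotate r cs))" by (simp add: strict_sorted_iff)
  then show ?thesis by (simp add: distinct_map)
qed

lemma rot3:
  assumes "sorted_wrt (<) (map (z::nat\<Rightarrow>real) (rotate r [a,b,c]))"
  shows "(z a < z b \<and> z b < z c) \<or> (z b < z c \<and> z c < z a) \<or> (z c < z a \<and> z a < z b)"
proof -
  define q where "q = r mod 3"
  have m: "q = 0 \<or> q = 1 \<or> q = 2" unfolding q_def by auto
  have e: "rotate r [a,b,c] = rotate q [a,b,c]" unfolding q_def using rotate_conv_mod[of r "[a,b,c]"] by simp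
  have s: "sorted_wrt (<) (map z (rotate q [a,b,c]))" using assms unfolding e .
  have r1: "rotate 1 [a,b,c] = [b,c,a]" by simp
  have r2: "rotate 2 [a,b,c] = [c,a,b]" by (simp add: numeral_2_eq_2)
  from m show ?thesis
  proof (elim disjE)
    assume "q = 0" then show ?thesis using s by simp
  next
    assume "q = 1" then show ?thesis using s r1 by simp
  next
    assume "q = 2" then show ?thesis using s r2 by simp
  qed
qed



lemma frac_minus1: "frac (x - 1) = frac (x::real)"
proof -
  have "x - 1 = x + of_int (-1)" by simp
  then show ?thesis by (metis frac_add_of_int_right)
qed

lemma frac_neq:
  assumes "0 < d - c" "d - c < (1::real)"
  shows "frac c \<noteq> frac d"
proof
  assume "frac c = frac d"
  then have "d - c = of_int (\<lfloor>d\<rfloor> - \<lfloor>c\<rfloor>)" unfolding frac_def by simp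
  then show False using assms
    by (metis of_int_0_less_iff of_int_less_1_iff zle_diff1_eq zless_imp_add1_zle
        add.left_neutral diff_gt_0_iff_gt linorder_not_le)
qed

lemma frac_chamber_aux:
  assumes sg: "simple_graph n E"
  shows "\<forall>w z. is_orientation n E w \<and> z \<in> Zset w \<and> (\<forall>v\<in>{1..n}. L \<le> \<lfloor>z v\<rfloor>)
     \<and> (\<Sum>v\<in>{1..n}. nat (\<lfloor>z v\<rfloor> - L)) = N
     \<longrightarrow> induced_orientation E (\<lambda>v. frac (z v)) \<in> tor_class n w"
proof (induction N rule: less_induct)
  case (less N)
  show ?case
  proof (intro allI impI, elim conjE)
    fix w z
    assume o: "is_orientation n E w" and zZ: "z \<in> Zset w" and Lb: "\<forall>v\<in>{1..n}. L \<le> \<lfloor>z v\<rfloor>"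
      and NN: "(\<Sum>v\<in>{1..n}. nat (\<lfloor>z v\<rfloor> - L)) = N"
    have zw: "0 < z b - z a \<and> z b - z a < 1" if "(a,b) \<in> w" for a b
      using zZ that unfolding Zset_def by auto
    show "induced_orientation E (\<lambda>v. frac (z v)) \<in> tor_class n w"
    proof (cases "\<forall>u\<in>{1..n}. \<forall>u'\<in>{1..n}. \<lfloor>z u\<rfloor> = \<lfloor>z u'\<rfloor>")
      case True
      have "induced_orientation E (\<lambda>v. frac (z v)) = w"
      proof (rule ind_eq[OF o], intro ballI, clarify)
        fix a b assume ab: "(a,b) \<in> w"
        then have "a \<in> {1..n}" "b \<in> {1..n}" using edge_in[OF sg o] by auto
        then have "\<lfloor>z a\<rfloor> = \<lfloor>z b\<rfloor>" using True by blast
        then show "frac (z a) < frac (z b)" using zw[OF ab] unfolding frac_def by simp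
      qed
      then show ?thesis using class_refl by simp
    next
      case False
      then obtain u u' where uu: "u \<in> {1..n}" "u' \<in> {1..n}" "\<lfloor>z u\<rfloor> < \<lfloor>z u'\<rfloor>"
        by (metis linorder_neqE)
      have fin: "finite (z ` {1..n})" "z ` {1..n} \<noteq> {}" using uu by auto
      obtain v where v: "v \<in> {1..n}" "z v = Max (z ` {1..n})"
        using Max_in[OF fin] by auto
      have vmax: "z x \<le> z v" if "x \<in> {1..n}" for x using Max_ge[OF fin(1)] that v by auto
      have sink: "(v,b) \<notin> w" for b
      proof
        assume "(v,b) \<in> w"
        then have "b \<in> {1..n}" "z v < z b" using edge_in[OF sg o] zw by auto
        then show False using vmax by force
      qed
      have irr: "(a,a) \<notin> w" for a using o unfolding is_orientation_def by auto
      have fv: "\<lfloor>z v\<rfloor> - 1 \<ge> L"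
      proof -
        have "\<lfloor>z u'\<rfloor> \<le> \<lfloor>z v\<rfloor>" using vmax[OF uu(2)] by (simp add: floor_mono)
        then show ?thesis using uu Lb by fastforce
      qed
      define w0 where "w0 = {(a,b). (a,b) \<in> w \<and> b \<noteq> v} \<union> {(v,a) | a. (a,v) \<in> w}"
      define z' where "z' = z(v := z v - 1)"
      have o0: "is_orientation n E w0"
      proof -
        have c: "{b,a} = {a,b}" for a b :: nat by blast
        have oe: "a \<noteq> b \<and> {a,b} \<in> E" if "(a,b) \<in> w" for a b
          using that o unfolding is_orientation_def by blast
        have A: "a \<noteq> b \<and> {a,b} \<in> E" if "(a,b) \<in> w0" for a b
        proof -
          from that consider "(a,b) \<in> w" | "a = v" "(b,a) \<in> w" unfolding w0_def by blast
          then show ?thesis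
          proof cases
            case 1 then show ?thesis using oe by blast
          next
            case 2 then show ?thesis using oe[of b a] c[of a b] by auto
          qed
        qed
        have B: "((a,b) \<in> w0) = ((b,a) \<notin> w0)" if "a \<noteq> b" "{a,b} \<in> E" for a b
        proof -
          have ow: "((a,b) \<in> w) = ((b,a) \<notin> w)" using o that unfolding is_orientation_def by blast
          show ?thesis
          proof (cases "a = v")
            case True then show ?thesis using ow sink that unfolding w0_def by auto
          next
            case F1: False
            show ?thesis
            proof (cases "b = v")
              case True then show ?thesis using ow sink that F1 unfolding w0_def by auto
            next
              case False then show ?thesis using ow F1 unfolding w0_def by auto
            qed
          qed
        qed
        have A': "\<forall>(a,b)\<in>w0. a \<noteq> b \<and> {a,b} \<in> E" using A by blast
        have B': "\<forall>a b. a \<noteq> b \<and> {a, b} \<in> E \<longrightarrow> ((a, b) \<in> w0) = ((b, a) \<notin> w0)"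
          by (intro allI impI, elim conjE, rule B)
        show ?thesis unfolding is_orientation_def using A' B' by (rule conjI)
      qed
      have z0: "z' \<in> Zset w0"
        unfolding Zset_def
      proof (clarify)
        fix a b assume "(a,b) \<in> w0"
        then consider "(a,b) \<in> w" "b \<noteq> v" "a \<noteq> v" | "a = v" "(b,v) \<in> w"
          unfolding w0_def using sink by auto
        then show "0 < z' b - z' a \<and> z' b - z' a < 1"
        proof cases
          case 1 then show ?thesis using zw[of a b] unfolding z'_def by auto
        next
          case 2 then show ?thesis using zw[of b v] irr unfolding z'_def by auto
        qed
      qed
      have fz': "\<lfloor>z' x\<rfloor> = (if x = v then \<lfloor>z v\<rfloor> - 1 else \<lfloor>z x\<rfloor>)" for x
        unfolding z'_def by auto
      have Lb0: "\<forall>x\<in>{1..n}. L \<le> \<lfloor>z' x\<rfloor>" using Lb fv fz' by auto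
      have sumv: "(\<Sum>x\<in>{1..n}. f x) = f v + (\<Sum>x\<in>{1..n}-{v}. f x)" for f :: "nat \<Rightarrow> nat"
        using v by (simp add: sum.remove)
      have same: "(\<Sum>x\<in>{1..n}-{v}. nat (\<lfloor>z' x\<rfloor> - L)) = (\<Sum>x\<in>{1..n}-{v}. nat (\<lfloor>z x\<rfloor> - L))"
        by (rule sum.cong) (auto simp: fz')
      have lt: "(\<Sum>x\<in>{1..n}. nat (\<lfloor>z' x\<rfloor> - L)) < N"
        using sumv[of "\<lambda>x. nat (\<lfloor>z' x\<rfloor> - L)"] sumv[of "\<lambda>x. nat (\<lfloor>z x\<rfloor> - L)"] same NN fz'[of v] fv
        by simp
      have IH: "induced_orientation E (\<lambda>x. frac (z' x)) \<in> tor_class n w0"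
        using less.IH[OF lt] o0 z0 Lb0 by blast
      have fr: "(\<lambda>x. frac (z' x)) = (\<lambda>x. frac (z x))"
        unfolding z'_def using frac_minus1 by auto
      have src: "is_source n w0 v" unfolding is_source_def w0_def using v irr by auto
      have fl: "flip_at w0 v = w"
        unfolding flip_at_def w0_def using sink irr by auto
      have "flip_step n w0 w" unfolding flip_step_def using src fl by auto
      then have "w \<in> tor_class n w0" unfolding tor_class_def by auto
      then have "tor_class n w = tor_class n w0" by (rule class_sym)
      then show ?thesis using IH fr by simp
    qed
  qed
qed

lemma frac_chamber:
  assumes sg: "simple_graph n E" and o: "is_orientation n E w" and z: "z \<in> Zset w"
  shows "(\<lambda>v. frac (z v)) \<in> tor_chamber n E w"
proof -
  define L where "L = Min ((\<lambda>v. \<lfloor>z v\<rfloor>) ` {1..n})"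
  have Lb: "\<forall>v\<in>{1..n}. L \<le> \<lfloor>z v\<rfloor>"
  proof
    fix v assume "v \<in> {1..n}"
    then show "L \<le> \<lfloor>z v\<rfloor>" unfolding L_def by (intro Min_le) auto
  qed
  have cl: "induced_orientation E (\<lambda>v. frac (z v)) \<in> tor_class n w"
    using frac_chamber_aux[OF sg, of L] o z Lb by blast
  have av: "frac (z a) \<noteq> frac (z b)" if "a \<noteq> b" "{a,b} \<in> E" for a b
  proof -
    have "(a,b) \<in> w \<or> (b,a) \<in> w" using o that unfolding is_orientation_def by blast
    then show ?thesis using z frac_neq unfolding Zset_def by fastforce
  qed
  show ?thesis unfolding tor_chamber_def using cl av by (auto simp: frac_lt_1)
qed



definition Sh :: "(nat \<times> nat) set \<Rightarrow> (nat \<Rightarrow> int) \<Rightarrow> (nat \<times> nat) set" where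
  "Sh w h = {(a,b). (a,b) \<in> w \<and> h a = h b} \<union> {(b,a) | a b. (a,b) \<in> w \<and> h b = h a + 1}"

lemma memSh: "((p,q) \<in> Sh w g) = (((p,q) \<in> w \<and> g p = g q) \<or> ((q,p) \<in> w \<and> g p = g q + 1))"
  unfolding Sh_def by blast

lemma unflip:
  assumes "\<forall>a. (a,v) \<notin> A"
  shows "A = {(a,b). (a,b) \<in> flip_at A v \<and> b \<noteq> v} \<union> {(v,a) | a. (a,v) \<in> flip_at A v}"
  using assms unfolding flip_at_def by blast

lemma flip_fwd:
  assumes irr: "\<And>a. (a,a) \<notin> w" and hw: "\<forall>(a,b)\<in>w. h b = h a \<or> h b = h a + 1"
    and src: "\<forall>a. (a,v) \<notin> Sh w h"
  shows "flip_at (Sh w h) v = Sh w (h(v := h v - 1)) \<and>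
    (\<forall>(a,b)\<in>w. (h(v := h v - 1)) b = (h(v := h v - 1)) a \<or> (h(v := h v - 1)) b = (h(v := h v - 1)) a + 1)"
proof -
  have out: "h b = h v" if "(v,b) \<in> w" for b
  proof -
    have "h b = h v \<or> h b = h v + 1" using hw that by auto
    moreover have "(b,v) \<in> Sh w h" if "h b = h v + 1" using that \<open>(v,b) \<in> w\<close> unfolding Sh_def by blast
    ultimately show ?thesis using src by blast
  qed
  have inn: "h v = h a + 1" if "(a,v) \<in> w" for a
  proof -
    have "h v = h a \<or> h v = h a + 1" using hw that by auto
    moreover have "(a,v) \<in> Sh w h" if "h v = h a" using that \<open>(a,v) \<in> w\<close> unfolding Sh_def by auto
    ultimately show ?thesis using src by blast
  qed
  define g where "g = h(v := h v - 1)"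
  have gv: "g v = h v - 1" unfolding g_def by simp
  have go: "g x = h x" if "x \<noteq> v" for x using that unfolding g_def by simp
  have 1: "flip_at (Sh w h) v = Sh w g"
  proof (rule set_eqI)
    fix pq :: "nat \<times> nat"
    obtain p q where pq: "pq = (p,q)" by fastforce
    have L: "(p,q) \<in> Sh w g" if "(p,q) \<in> flip_at (Sh w h) v"
    proof -
      from that consider "(p,q) \<in> Sh w h" "p \<noteq> v" | "q = v" "(v,p) \<in> Sh w h"
        unfolding flip_at_def by blast
      then show ?thesis
      proof cases
        case 1
        then have "q \<noteq> v" using src by blast
        then show ?thesis using 1 go[of p] go[of q] memSh[of p q w h] memSh[of p q w g] by simp
      next
        case 2
        have pv: "p \<noteq> v" using 2 src by blast
        from 2(2) have "((v,p) \<in> w \<and> h v = h p) \<or> ((p,v) \<in> w \<and> h v = h p + 1)"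
          using memSh by blast
        then show ?thesis
        proof
          assume a: "(v,p) \<in> w \<and> h v = h p"
          then have "g p = g v + 1" using gv go[OF pv] by simp
          then show ?thesis using a 2(1) memSh[of p v w g] by blast
        next
          assume a: "(p,v) \<in> w \<and> h v = h p + 1"
          then have "g p = g v" using gv go[OF pv] by simp
          then show ?thesis using a 2(1) memSh[of p v w g] by blast
        qed
      qed
    qed
    have R: "(p,q) \<in> flip_at (Sh w h) v" if "(p,q) \<in> Sh w g"
    proof -
      from that have m: "((p,q) \<in> w \<and> g p = g q) \<or> ((q,p) \<in> w \<and> g p = g q + 1)"
        using memSh by blast
      have pv: "p \<noteq> v"
      proof
        assume pv: "p = v"
        then have qv: "q \<noteq> v" using m irr by blast
        from m show False
        proof
          assume a: "(p,q) \<in> w \<and> g p = g q"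
          then show False using out[of q] pv gv go[OF qv] by simp
        next
          assume a: "(q,p) \<in> w \<and> g p = g q + 1"
          then show False using inn[of q] pv gv go[OF qv] by simp
        qed
      qed
      show ?thesis
      proof (cases "q = v")
        case True
        from m show ?thesis
        proof
          assume a: "(p,q) \<in> w \<and> g p = g q"
          then have "h v = h p + 1" using inn[of p] True by simp
          then have "(v,p) \<in> Sh w h" using a True memSh[of v p w h] by blast
          then show ?thesis using True unfolding flip_at_def by blast
        next
          assume a: "(q,p) \<in> w \<and> g p = g q + 1"
          then have "h p = h v" using out[of p] True by simp
          then have "(v,p) \<in> Sh w h" using a True memSh[of v p w h] by auto
          then show ?thesis using True unfolding flip_at_def by blast
        qed
      next
        case False
        then have "(p,q) \<in> Sh w h" using m go[OF pv] go[OF False] memSh[of p q w h] by simp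
        then show ?thesis using pv unfolding flip_at_def by blast
      qed
    qed
    show "(pq \<in> flip_at (Sh w h) v) = (pq \<in> Sh w g)" using L R pq by blast
  qed
  have 2: "\<forall>(a,b)\<in>w. g b = g a \<or> g b = g a + 1"
  proof -
    have X: "g b = g a \<or> g b = g a + 1" if ab: "(a,b) \<in> w" for a b
    proof -
    have hab: "h b = h a \<or> h b = h a + 1" using hw ab by auto
    show "g b = g a \<or> g b = g a + 1"
    proof (cases "a = v")
      case True
      then have "b \<noteq> v" using ab irr by blast
      then show ?thesis using True out[of b] ab gv go[of b] by simp
    next
      case F: False
      show ?thesis
      proof (cases "b = v")
        case True then show ?thesis using F inn[of a] ab gv go[of a] by simp
      next
        case False then show ?thesis using F hab go[of a] go[of b] by simp
      qed
    qed
    qed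
    show ?thesis using X by blast
  qed
  show ?thesis using 1 2 unfolding g_def by blast
qed

lemma flip_bwd:
  assumes irr: "\<And>a. (a,a) \<notin> w" and hw: "\<forall>(a,b)\<in>w. h b = h a \<or> h b = h a + 1"
    and src: "is_source n w3 v" and eq: "flip_at w3 v = Sh w h"
  shows "w3 = Sh w (h(v := h v + 1)) \<and>
    (\<forall>(a,b)\<in>w. (h(v := h v + 1)) b = (h(v := h v + 1)) a \<or> (h(v := h v + 1)) b = (h(v := h v + 1)) a + 1)"
proof -
  have s3: "\<forall>a. (a,v) \<notin> w3" using src unfolding is_source_def by auto
  have sink: "(v,b) \<notin> Sh w h" for b
    using s3 unfolding eq[symmetric] flip_at_def by auto
  define g where "g = h(v := h v + 1)"
  have gv: "g v = h v + 1" unfolding g_def by simp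
  have go: "g x = h x" if "x \<noteq> v" for x using that unfolding g_def by simp
  have out: "h b = h v + 1" if "(v,b) \<in> w" for b
  proof -
    have "h b = h v \<or> h b = h v + 1" using hw that by auto
    moreover have "(v,b) \<in> Sh w h" if "h b = h v" using that \<open>(v,b) \<in> w\<close> memSh[of v b w h] by auto
    ultimately show ?thesis using sink by blast
  qed
  have inn: "h v = h a" if "(a,v) \<in> w" for a
  proof -
    have "h v = h a \<or> h v = h a + 1" using hw that by auto
    moreover have "(v,a) \<in> Sh w h" if "h v = h a + 1" using that \<open>(a,v) \<in> w\<close> memSh[of v a w h] by auto
    ultimately show ?thesis using sink by blast
  qed
  have gw: "\<forall>(a,b)\<in>w. g b = g a \<or> g b = g a + 1"
  proof -
    have X: "g b = g a \<or> g b = g a + 1" if ab: "(a,b) \<in> w" for a b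
    proof -
    have hab: "h b = h a \<or> h b = h a + 1" using hw ab by auto
    show "g b = g a \<or> g b = g a + 1"
    proof (cases "a = v")
      case True
      then have "b \<noteq> v" using ab irr by blast
      then show ?thesis using True out[of b] ab gv go[of b] by simp
    next
      case F: False
      show ?thesis
      proof (cases "b = v")
        case True then show ?thesis using F inn[of a] ab gv go[of a] by simp
      next
        case False then show ?thesis using F hab go[of a] go[of b] by simp
      qed
    qed
    qed
    show ?thesis using X by blast
  qed
  have srcg: "\<forall>a. (a,v) \<notin> Sh w g"
  proof (intro allI notI)
    fix a assume "(a,v) \<in> Sh w g"
    then have m: "((a,v) \<in> w \<and> g a = g v) \<or> ((v,a) \<in> w \<and> g a = g v + 1)" using memSh by blast
    have av: "a \<noteq> v" using m irr by blast
    from m show False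
    proof
      assume x: "(a,v) \<in> w \<and> g a = g v"
      then show False using inn[of a] gv go[OF av] by simp
    next
      assume x: "(v,a) \<in> w \<and> g a = g v + 1"
      then show False using out[of a] gv go[OF av] by simp
    qed
  qed
  have gg: "g(v := g v - 1) = h" unfolding g_def by auto
  have ff: "flip_at (Sh w g) v = Sh w h" using flip_fwd[OF irr gw srcg] gg by simp
  have "w3 = Sh w g"
    using unflip[OF s3] unflip[OF srcg] eq ff by simp
  then show ?thesis using gw unfolding g_def by blast
qed

lemma flip_inv:
  assumes irr: "\<And>a. (a,a) \<notin> w"
    and R: "(\<lambda>a b. flip_step n a b \<or> flip_step n b a)\<^sup>*\<^sup>* w w2"
  shows "\<exists>h. (\<forall>(a,b)\<in>w. h b = h a \<or> h b = h a + 1) \<and> w2 = Sh w h"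
  using R
proof (induction rule: rtranclp_induct)
  case base
  have e0: "w = Sh w (\<lambda>_. 0)" unfolding Sh_def by auto
  show ?case
  proof (rule exI[of _ "\<lambda>_. 0"], rule conjI)
    show "\<forall>(a,b)\<in>w. (\<lambda>_. 0::int) b = (\<lambda>_. 0) a \<or> (\<lambda>_. 0::int) b = (\<lambda>_. 0) a + 1" by simp
    show "w = Sh w (\<lambda>_. 0)" by (rule e0)
  qed
next
  case (step w2 w3)
  then obtain h where hw: "\<forall>(a,b)\<in>w. h b = h a \<or> h b = h a + 1" and e: "w2 = Sh w h" by blast
  from step.hyps(2) show ?case
  proof
    assume "flip_step n w2 w3"
    then obtain v where v: "is_source n w2 v" "w3 = flip_at w2 v" unfolding flip_step_def by blast
    have "\<forall>a. (a,v) \<notin> Sh w h" using v(1) e unfolding is_source_def by auto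
    then have "flip_at (Sh w h) v = Sh w (h(v := h v - 1)) \<and>
      (\<forall>(a,b)\<in>w. (h(v := h v - 1)) b = (h(v := h v - 1)) a \<or> (h(v := h v - 1)) b = (h(v := h v - 1)) a + 1)"
      by (rule flip_fwd[OF irr hw])
    note F1 = this
    have F2: "w3 = flip_at (Sh w h) v" using v(2) e by simp
    show ?thesis
    proof (rule exI[of _ "h(v := h v - 1)"], rule conjI)
      show "w3 = Sh w (h(v := h v - 1))" using F1 F2 by simp
    qed (rule conjunct2[OF F1])
  next
    assume "flip_step n w3 w2"
    then obtain v where v: "is_source n w3 v" "w2 = flip_at w3 v" unfolding flip_step_def by blast
    have "w3 = Sh w (h(v := h v + 1)) \<and>
      (\<forall>(a,b)\<in>w. (h(v := h v + 1)) b = (h(v := h v + 1)) a \<or> (h(v := h v + 1)) b = (h(v := h v + 1)) a + 1)"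
      using flip_bwd[OF irr hw v(1)] v(2) e by simp
    note F1 = this
    show ?thesis
    proof (rule exI[of _ "h(v := h v + 1)"], rule conjI)
      show "w3 = Sh w (h(v := h v + 1))" using F1 by simp
    qed (rule conjunct2[OF F1])
  qed
qed

lemma lift_pt:
  assumes sg: "simple_graph n E" and o: "is_orientation n E w"
    and y: "y \<in> tor_chamber n E w0" and cl: "w \<in> tor_class n w0"
  shows "\<exists>h::nat \<Rightarrow> int. (\<lambda>v. y v + of_int (h v)) \<in> Zset w"
proof -
  have irr: "(a,a) \<notin> w" for a using o unfolding is_orientation_def by auto
  have "induced_orientation E y \<in> tor_class n w0" using y unfolding tor_chamber_def by blast
  then have "induced_orientation E y \<in> tor_class n w" using class_sym[OF cl] by simp
  then have "(\<lambda>a b. flip_step n a b \<or> flip_step n b a)\<^sup>*\<^sup>* w (induced_orientation E y)"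
    unfolding tor_class_def by simp
  then obtain h where hw: "\<forall>(a,b)\<in>w. h b = h a \<or> h b = h a + 1"
    and e: "induced_orientation E y = Sh w h" using flip_inv[OF irr] by blast
  have yr: "0 \<le> y v \<and> y v < 1" if "v \<in> {1..n}" for v using y that unfolding tor_chamber_def by auto
  have "(\<lambda>v. y v + of_int (h v)) \<in> Zset w"
    unfolding Zset_def
  proof (clarify)
    fix a b assume ab: "(a,b) \<in> w"
    have ia: "a \<in> {1..n}" "b \<in> {1..n}" using edge_in[OF sg o ab] by auto
    have "h b = h a \<or> h b = h a + 1" using hw ab by auto
    then show "0 < y b + real_of_int (h b) - (y a + real_of_int (h a)) \<and>
               y b + real_of_int (h b) - (y a + real_of_int (h a)) < 1"
    proof
      assume hb: "h b = h a"
      then have "(a,b) \<in> Sh w h" using ab unfolding Sh_def by auto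
      then have "y a < y b" using e unfolding induced_orientation_def by auto
      then show ?thesis using hb yr[OF ia(1)] yr[OF ia(2)] by auto
    next
      assume hb: "h b = h a + 1"
      then have "(b,a) \<in> Sh w h" using ab unfolding Sh_def by auto
      then have "y b < y a" using e unfolding induced_orientation_def by auto
      then show ?thesis using hb yr[OF ia(1)] yr[OF ia(2)] by auto
    qed
  qed
  then show ?thesis by blast
qed

lemma convex_Z:
  assumes "z1 \<in> Zset w" "z2 \<in> Zset w" "0 \<le> t" "t \<le> (1::real)"
  shows "(\<lambda>v. t * z1 v + (1 - t) * z2 v) \<in> Zset w"
  unfolding Zset_def
proof (clarify)
  fix a b assume ab: "(a,b) \<in> w"
  have d1: "0 < z1 b - z1 a" "z1 b - z1 a < 1" and d2: "0 < z2 b - z2 a" "z2 b - z2 a < 1"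
    using assms(1,2) ab unfolding Zset_def by auto
  have e: "t * z1 b + (1 - t) * z2 b - (t * z1 a + (1 - t) * z2 a)
     = t * (z1 b - z1 a) + (1 - t) * (z2 b - z2 a)" by (simp add: algebra_simps)
  have p1: "0 \<le> t * (z1 b - z1 a)" "t * (z1 b - z1 a) \<le> t" using d1 assms(3)
    by (auto intro: mult_nonneg_nonneg mult_left_le)
  have p2: "0 \<le> (1-t) * (z2 b - z2 a)" "(1-t) * (z2 b - z2 a) \<le> 1 - t" using d2 assms(4)
    by (auto intro: mult_nonneg_nonneg mult_left_le)
  have pos: "0 < t * (z1 b - z1 a) + (1 - t) * (z2 b - z2 a)"
  proof (cases "t = 0")
    case True then show ?thesis using d2 by simp
  next
    case False then have "0 < t * (z1 b - z1 a)" using assms(3) d1 by simp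
    then show ?thesis using p2 by linarith
  qed
  have lt: "t * (z1 b - z1 a) + (1 - t) * (z2 b - z2 a) < 1"
  proof (cases "t = 1")
    case True then show ?thesis using d1 by simp
  next
    case False then have "(1-t) * (z2 b - z2 a) < 1 - t" using assms(4) d2 by simp
    then show ?thesis using p1 by linarith
  qed
  show "0 < t * z1 b + (1 - t) * z2 b - (t * z1 a + (1 - t) * z2 a) \<and>
        t * z1 b + (1 - t) * z2 b - (t * z1 a + (1 - t) * z2 a) < 1"
    using e pos lt by simp
qed



lemma rank_pt:
  assumes sg: "simple_graph n E" and o: "is_orientation n E w" and ac: "acyclic w"
    and dc: "\<forall>(a,b)\<in>w. b \<in> D \<longrightarrow> a \<in> D"
  shows "\<exists>z. z \<in> Zset w \<and> (\<forall>v. 0 \<le> z v \<and> z v < 1) \<and> (\<forall>a b. a \<in> D \<and> b \<notin> D \<longrightarrow> z a < z b)"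
proof -
  define rk where "rk v = card {c\<in>{1..n}. (c,v) \<in> w\<^sup>+}" for v
  have rkle: "rk v \<le> n" for v
  proof -
    have "rk v \<le> card {1..n}" unfolding rk_def by (rule card_mono) auto
    then show ?thesis by simp
  qed
  have rklt: "rk a < rk b" if ab: "(a,b) \<in> w" for a b
  proof -
    have an: "a \<in> {1..n}" using edge_in[OF sg o ab] by blast
    have sub: "insert a {c\<in>{1..n}. (c,a) \<in> w\<^sup>+} \<subseteq> {c\<in>{1..n}. (c,b) \<in> w\<^sup>+}"
      using an ab by (auto intro: trancl_into_trancl)
    have nin: "a \<notin> {c\<in>{1..n}. (c,a) \<in> w\<^sup>+}" using ac unfolding acyclic_def by blast
    have "card (insert a {c\<in>{1..n}. (c,a) \<in> w\<^sup>+}) \<le> rk b"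
      unfolding rk_def by (rule card_mono[OF _ sub]) auto
    moreover have "card (insert a {c\<in>{1..n}. (c,a) \<in> w\<^sup>+}) = Suc (rk a)"
      unfolding rk_def using nin by simp
    ultimately show ?thesis by simp
  qed
  define z where "z v = (real (rk v) + (if v \<in> D then 0 else real n + 1)) / (2 * real n + 3)" for v
  have den: "(0::real) < 2 * real n + 3" by simp
  have zr: "0 \<le> z v \<and> z v < 1" for v
  proof -
    have "real (rk v) \<le> real n" using rkle[of v] by simp
    then have "real (rk v) + (if v \<in> D then 0 else real n + 1) < 2 * real n + 3" by simp
    then show ?thesis unfolding z_def using den by (simp add: divide_less_eq)
  qed
  have zZ: "z \<in> Zset w"
    unfolding Zset_def
  proof (clarify)
    fix a b assume ab: "(a,b) \<in> w"
    have "real (rk a) < real (rk b)" using rklt[OF ab] by simp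
    moreover have "(if a \<in> D then 0 else real n + 1) \<le> (if b \<in> D then 0 else real n + 1)"
      using dc ab by auto
    ultimately have "real (rk a) + (if a \<in> D then 0 else real n + 1) < real (rk b) + (if b \<in> D then 0 else real n + 1)"
      by linarith
    then have "z a < z b" unfolding z_def using den by (simp add: divide_strict_right_mono)
    then show "0 < z b - z a \<and> z b - z a < 1" using zr[of a] zr[of b] by linarith
  qed
  have zD: "z a < z b" if "a \<in> D" "b \<notin> D" for a b
  proof -
    have "real (rk a) + (if a \<in> D then 0 else real n + 1) < real (rk b) + (if b \<in> D then 0 else real n + 1)"
      using that rkle[of a] by simp
    then show ?thesis unfolding z_def using den by (simp add: divide_strict_right_mono)
  qed
  show ?thesis using zZ zr zD by blast
qed

lemma no_int:
  assumes fr: "\<forall>z\<in>Zset w. frac (z i) \<noteq> frac (z j)"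
    and y0: "y0 \<in> Zset w" and d0: "0 < y0 j - y0 i" "y0 j - y0 i < 1"
    and z: "z \<in> Zset w"
  shows "0 < z j - z i \<and> z j - z i < 1"
proof (rule ccontr)
  assume nc: "\<not> (0 < z j - z i \<and> z j - z i < 1)"
  define dz where "dz = z j - z i"
  define d0 where "d0 = y0 j - y0 i"
  obtain c :: real where c: "c = 0 \<or> c = 1" and cb: "(dz \<le> c \<and> c < d0) \<or> (d0 < c \<and> c \<le> dz)"
    using nc d0 unfolding dz_def d0_def
    by (metis linorder_not_le)
  define t where "t = (c - dz) / (d0 - dz)"
  have t01: "0 \<le> t \<and> t \<le> 1"
    using cb unfolding t_def by (auto simp: divide_simps)
  define p where "p = (\<lambda>v. t * y0 v + (1 - t) * z v)"
  have pZ: "p \<in> Zset w" unfolding p_def using convex_Z[OF y0 z] t01 by blast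
  have "d0 \<noteq> dz" using cb by auto
  then have pd: "p j - p i = c"
    unfolding p_def t_def dz_def[symmetric] d0_def[symmetric]
  proof -
    assume ne: "d0 \<noteq> dz"
    have gen: "T * y0 j + (1 - T) * z j - (T * y0 i + (1 - T) * z i) = T * d0 + (1 - T) * dz" for T
      unfolding d0_def dz_def by (simp add: algebra_simps)
    have "(c - dz) / (d0 - dz) * y0 j + (1 - (c - dz) / (d0 - dz)) * z j -
      ((c - dz) / (d0 - dz) * y0 i + (1 - (c - dz) / (d0 - dz)) * z i)
      = (c - dz) / (d0 - dz) * d0 + (1 - (c - dz) / (d0 - dz)) * dz"
      by (rule gen)
    also have "\<dots> = dz + (c - dz) / (d0 - dz) * (d0 - dz)"
    proof -
      have g2: "T * d0 + (1 - T) * dz = dz + T * (d0 - dz)" for T :: real by (simp add: algebra_simps)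
      show ?thesis by (rule g2)
    qed
    also have "\<dots> = c" using ne by simp
    finally show "(c - dz) / (d0 - dz) * y0 j + (1 - (c - dz) / (d0 - dz)) * z j -
      ((c - dz) / (d0 - dz) * y0 i + (1 - (c - dz) / (d0 - dz)) * z i) = c" .
  qed
  have "frac (p i) = frac (p j)"
    using c
  proof
    assume "c = 0" then show ?thesis using pd by simp
  next
    assume "c = 1" then have "p i = p j - 1" using pd by simp
    then show ?thesis using frac_minus1 by simp
  qed
  then show False using fr pZ by blast
qed

lemma cyc3:
  fixes ya yb yc :: real and ha hb hc :: int
  assumes "0 \<le> ya" "ya < 1" "0 \<le> yb" "yb < 1" "0 \<le> yc" "yc < 1"
    and o1: "ya + ha < yb + hb" and o2: "yb + hb < yc + hc" and o3: "yc + hc < ya + ha + 1"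
  shows "(ya < yb \<and> yb < yc) \<or> (yb < yc \<and> yc < ya) \<or> (yc < ya \<and> ya < yb)"
proof -
  have "real_of_int (ha - hb) < 1" using assms by simp
  then have 1: "ha \<le> hb" by simp
  have "real_of_int (hb - hc) < 1" using assms by simp
  then have 2: "hb \<le> hc" by simp
  have "real_of_int (hc - ha) < 2" using assms by simp
  then have 3: "hc \<le> ha + 1" by simp
  consider "hb = ha" "hc = ha" | "hb = ha" "hc = ha + 1" | "hb = ha + 1" "hc = ha + 1"
    using 1 2 3 by linarith
  then show ?thesis
  proof cases
    case 1 then show ?thesis using o1 o2 by simp
  next
    case 2 then show ?thesis using o1 o3 by simp
  next
    case 3 then show ?thesis using o2 o3 by simp
  qed
qed



lemma trancl_Z:
  assumes "z \<in> Zset w" "(a,b) \<in> w\<^sup>*" "a \<noteq> b"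
  shows "z a < z b"
proof -
  have t: "(a,b) \<in> w\<^sup>+" using rtranclD[OF assms(2)] assms(3) by blast
  have m: "\<forall>(a,b)\<in>w. z a < z b"
  proof (clarify)
    fix p q assume "(p,q) \<in> w"
    then show "z p < z q" using assms(1) unfolding Zset_def by auto
  qed
  show ?thesis by (rule trancl_incr[OF m t])
qed

lemma rot_exists:
  assumes "(z a < z b \<and> z b < z c) \<or> (z b < z c \<and> z c < z a) \<or> (z c < z a \<and> (z a::real) < z b)"
  shows "\<exists>r. sorted_wrt (<) (map z (rotate r [a,b,c]))"
proof -
  have r1: "rotate 1 [a,b,c] = [b,c,a]" by simp
  have r2: "rotate 2 [a,b,c] = [c,a,b]" by (simp add: numeral_2_eq_2)
  from assms show ?thesis
  proof (elim disjE)
    assume "z a < z b \<and> z b < z c"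
    then have "sorted_wrt (<) (map z (rotate 0 [a,b,c]))" by simp
    then show ?thesis by blast
  next
    assume "z b < z c \<and> z c < z a"
    then have "sorted_wrt (<) (map z (rotate 1 [a,b,c]))" unfolding r1 by simp
    then show ?thesis by blast
  next
    assume "z c < z a \<and> z a < z b"
    then have "sorted_wrt (<) (map z (rotate 2 [a,b,c]))" unfolding r2 by simp
    then show ?thesis by blast
  qed
qed

lemma main1:
  assumes sg: "simple_graph n E" and wA: "w \<in> Acyc n E" and i: "i \<in> {1..n}" and j: "j \<in> {1..n}"
  shows "\<exists>w'\<in>tor_class n w. poset_interval n w' i j = tor_interval n E w i j"
proof -
  have o: "is_orientation n E w" and ac: "acyclic w" using wA unfolding Acyc_def by auto
  show ?thesis
  proof (cases "i = j")
    case True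
    have "poset_interval n w i j = {i}"
    proof
      show "{i} \<subseteq> poset_interval n w i j" using i True unfolding poset_interval_def by auto
      show "poset_interval n w i j \<subseteq> {i}"
      proof
        fix k assume "k \<in> poset_interval n w i j"
        then have k: "(i,k) \<in> w\<^sup>*" "(k,i) \<in> w\<^sup>*" using True unfolding poset_interval_def by auto
        show "k \<in> {i}"
        proof (rule ccontr)
          assume "k \<notin> {i}"
          then have "(i,k) \<in> w\<^sup>+" using rtranclD[OF k(1)] by blast
          then have "(i,i) \<in> w\<^sup>+" using k(2) by (rule trancl_rtrancl_trancl)
          then show False using ac unfolding acyclic_def by blast
        qed
      qed
    qed
    moreover have "tor_interval n E w i j = {i}" using True unfolding tor_interval_def by simp
    ultimately show ?thesis using class_refl by blast
  next
    case ij: False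
    show ?thesis
    proof (cases "toric_chain n E w {i,j}")
      case False
      have sij: "set [i,j] = {i,j}" by simp
      have nr: "\<not> restricts_to n E w [i,j]" using False sij unfolding toric_chain_def by blast
      have d: "distinct [i,j]" "set [i,j] \<subseteq> {1..n}" using ij i j by auto
      have "\<not> (\<forall>x\<in>tor_chamber n E w. \<exists>r. sorted_wrt (<) (map x (rotate r [i,j])) \<and> (\<forall>k\<in>set [i,j]. 0 \<le> x k \<and> x k < 1))"
        using nr d unfolding restricts_to_def by blast
      then obtain x where x: "x \<in> tor_chamber n E w"
        and nx0: "\<not> (\<exists>r. sorted_wrt (<) (map x (rotate r [i,j])) \<and> (\<forall>k\<in>set [i,j]. 0 \<le> x k \<and> x k < 1))"
        by blast
      have nx: "\<not> (sorted_wrt (<) (map x (rotate r [i,j])) \<and> (\<forall>k\<in>set [i,j]. 0 \<le> x k \<and> x k < 1))" for r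
        using nx0 by blast
      have xr: "0 \<le> x v \<and> x v < 1" if "v \<in> {1..n}" for v using x that unfolding tor_chamber_def by auto
      have "\<not> x i < x j" using nx[of 0] xr[OF i] xr[OF j] by simp
      moreover have "\<not> x j < x i" using nx[of 1] xr[OF i] xr[OF j] by simp
      ultimately have xij: "x i = x j" by simp
      define w' where "w' = induced_orientation E x"
      have wcl: "w' \<in> tor_class n w" using x unfolding tor_chamber_def w'_def by blast
      have inc: "\<forall>(a,b)\<in>w'. x a < x b" unfolding w'_def induced_orientation_def by auto
      have "poset_interval n w' i j = {}"
      proof (rule ccontr)
        assume "poset_interval n w' i j \<noteq> {}"
        then obtain k where "(i,k) \<in> w'\<^sup>*" "(k,j) \<in> w'\<^sup>*" unfolding poset_interval_def by auto
        then have "(i,j) \<in> w'\<^sup>*" by (rule rtrancl_trans)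
        then have "(i,j) \<in> w'\<^sup>+" using ij by (blast dest: rtranclD)
        then have "x i < x j" by (rule trancl_incr[OF inc])
        then show False using xij by simp
      qed
      moreover have "tor_interval n E w i j = {}" using ij False unfolding tor_interval_def by simp
      ultimately show ?thesis using wcl by blast
    next
      case True
      then obtain cs where cs: "set cs = {i,j}" "restricts_to n E w cs" unfolding toric_chain_def by blast
      have H: "y i \<noteq> y j" if "y \<in> tor_chamber n E w" for y
      proof -
        have "inj_on y {i,j}" using restricts_inj[OF cs(2) that] cs(1) by simp
        then show ?thesis using ij unfolding inj_on_def by blast
      qed
      obtain z0 where z0: "z0 \<in> Zset w"
        using rank_pt[OF sg o ac, of UNIV] by blast
      define z1 where "z1 v = z0 v - z0 i" for v
      have z1: "z1 \<in> Zset w" using z0 unfolding Zset_def z1_def by auto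
      define y0 where "y0 = (\<lambda>v. frac (z1 v))"
      have y0C: "y0 \<in> tor_chamber n E w" unfolding y0_def by (rule frac_chamber[OF sg o z1])
      have y0i: "y0 i = 0" unfolding y0_def z1_def by simp
      have y0r: "0 \<le> y0 v \<and> y0 v < 1" for v unfolding y0_def by (simp add: frac_lt_1)
      define w' where "w' = induced_orientation E y0"
      have wcl: "w' \<in> tor_class n w" using y0C unfolding tor_chamber_def w'_def by blast
      have av: "\<forall>a b. a \<noteq> b \<and> {a,b} \<in> E \<longrightarrow> y0 a \<noteq> y0 b" using y0C unfolding tor_chamber_def by blast
      have ow: "is_orientation n E w'" unfolding w'_def by (rule ind_orient[OF av])
      have inc: "\<forall>(a,b)\<in>w'. y0 a < y0 b" unfolding w'_def induced_orientation_def by auto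
      have acw: "acyclic w'" by (rule acyclic_incr[OF inc])
      have y0Z: "y0 \<in> Zset w'" unfolding Zset_def
      proof (clarify)
        fix a b assume "(a,b) \<in> w'"
        then have "y0 a < y0 b" using inc by blast
        then show "0 < y0 b - y0 a \<and> y0 b - y0 a < 1" using y0r[of a] y0r[of b] by linarith
      qed
      have chq: "tor_chamber n E w' = tor_chamber n E w" by (rule chamber_class[OF wcl])
      have fr: "\<forall>z\<in>Zset w'. frac (z i) \<noteq> frac (z j)"
      proof
        fix z assume "z \<in> Zset w'"
        then have "(\<lambda>v. frac (z v)) \<in> tor_chamber n E w" using frac_chamber[OF sg ow] chq by blast
        then show "frac (z i) \<noteq> frac (z j)" using H by blast
      qed
      have d0: "0 < y0 j - y0 i" "y0 j - y0 i < 1"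
        using H[OF y0C] y0i y0r[of j] by auto
      have K: "0 < z j - z i \<and> z j - z i < 1" if "z \<in> Zset w'" for z
        using no_int[OF fr y0Z d0 that] .
      have ijle: "(i,j) \<in> w'\<^sup>*"
      proof (rule ccontr)
        assume nij: "(i,j) \<notin> w'\<^sup>*"
        have dc: "\<forall>(a,b)\<in>w'. b \<in> {m. (i,m) \<notin> w'\<^sup>*} \<longrightarrow> a \<in> {m. (i,m) \<notin> w'\<^sup>*}"
          by (auto intro: rtrancl_into_rtrancl)
        obtain z where z: "z \<in> Zset w'" "\<forall>a b. a \<in> {m. (i,m) \<notin> w'\<^sup>*} \<and> b \<notin> {m. (i,m) \<notin> w'\<^sup>*} \<longrightarrow> z a < z b"
          using rank_pt[OF sg ow acw dc] by blast
        have "z j < z i" using z(2) nij by auto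
        then show False using K[OF z(1)] by simp
      qed
      have ti: "tor_interval n E w i j = {i,j} \<union> {k. k \<in> {1..n} \<and> restricts_to n E w [i,k,j]}"
        using ij True unfolding tor_interval_def by simp
      have "poset_interval n w' i j = tor_interval n E w i j"
      proof
        show "poset_interval n w' i j \<subseteq> tor_interval n E w i j"
        proof
          fix k assume "k \<in> poset_interval n w' i j"
          then have k: "k \<in> {1..n}" "(i,k) \<in> w'\<^sup>*" "(k,j) \<in> w'\<^sup>*" unfolding poset_interval_def by auto
          show "k \<in> tor_interval n E w i j"
          proof (cases "k = i \<or> k = j")
            case True then show ?thesis using ti by auto
          next
            case False
            have "restricts_to n E w [i,k,j]"
              unfolding restricts_to_def
            proof (intro conjI ballI)
              show "distinct [i,k,j]" using False ij by auto
              show "set [i,k,j] \<subseteq> {1..n}" using i j k by auto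
              fix y assume y: "y \<in> tor_chamber n E w"
              have yr: "0 \<le> y v \<and> y v < 1" if "v \<in> {1..n}" for v using y that unfolding tor_chamber_def by auto
              have y': "y \<in> tor_chamber n E w'" using y chq by simp
              obtain h :: "nat \<Rightarrow> int" where hz: "(\<lambda>v. y v + of_int (h v)) \<in> Zset w'"
                using lift_pt[OF sg ow y' class_refl] by blast
              have o1: "y i + of_int (h i) < y k + of_int (h k)"
                using trancl_Z[OF hz k(2)] False by auto
              have o2: "y k + of_int (h k) < y j + of_int (h j)"
                using trancl_Z[OF hz k(3)] False by auto
              have o3: "y j + of_int (h j) < y i + of_int (h i) + 1"
                using K[OF hz] by simp
              have "(y i < y k \<and> y k < y j) \<or> (y k < y j \<and> y j < y i) \<or> (y j < y i \<and> y i < y k)"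
                by (rule cyc3[OF _ _ _ _ _ _ o1 o2 o3]) (use yr i j k in auto)
              then have "\<exists>r. sorted_wrt (<) (map y (rotate r [i,k,j]))"
                by (rule rot_exists)
              then obtain r where "sorted_wrt (<) (map y (rotate r [i,k,j]))" by blast
              moreover have "\<forall>v\<in>set [i,k,j]. 0 \<le> y v \<and> y v < 1" using yr i j k by auto
              ultimately show "\<exists>r. sorted_wrt (<) (map y (rotate r [i,k,j])) \<and> (\<forall>v\<in>set [i,k,j]. 0 \<le> y v \<and> y v < 1)"
                by blast
            qed
            then show ?thesis using ti k(1) by auto
          qed
        qed
        show "tor_interval n E w i j \<subseteq> poset_interval n w' i j"
        proof
          fix k assume kt: "k \<in> tor_interval n E w i j"
          show "k \<in> poset_interval n w' i j"
          proof (cases "k = i \<or> k = j")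
            case True then show ?thesis using i j ijle unfolding poset_interval_def by auto
          next
            case False
            then have k: "k \<in> {1..n}" "restricts_to n E w [i,k,j]" using kt ti by auto
            have ZC: "z \<in> tor_chamber n E w" if "z \<in> Zset w'" "\<forall>v. 0 \<le> z v \<and> z v < 1" for z
            proof -
              have "(\<lambda>v. frac (z v)) \<in> tor_chamber n E w" using frac_chamber[OF sg ow that(1)] chq by simp
              moreover have "(\<lambda>v. frac (z v)) = z" using that(2) by (simp add: frac_eq)
              ultimately show ?thesis by simp
            qed
            have cyc: "(z i < z k \<and> z k < z j) \<or> (z k < z j \<and> z j < z i) \<or> (z j < z i \<and> z i < z k)"
              if zC: "z \<in> tor_chamber n E w" for z
            proof -
              have R: "\<forall>x\<in>tor_chamber n E w. \<exists>r. sorted_wrt (<) (map x (rotate r [i,k,j])) \<and> (\<forall>v\<in>set [i,k,j]. 0 \<le> x v \<and> x v < 1)"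
                by (rule conjunct2[OF conjunct2[OF k(2)[unfolded restricts_to_def]]])
              obtain r where "sorted_wrt (<) (map z (rotate r [i,k,j])) \<and> (\<forall>v\<in>set [i,k,j]. 0 \<le> z v \<and> z v < 1)"
                using bspec[OF R zC] by (elim exE)
              then show ?thesis by (elim conjE) (rule rot3)
            qed
            have ik: "(i,k) \<in> w'\<^sup>*"
            proof (rule ccontr)
              assume nik: "(i,k) \<notin> w'\<^sup>*"
              have dc: "\<forall>(a,b)\<in>w'. b \<in> {m. (i,m) \<notin> w'\<^sup>*} \<longrightarrow> a \<in> {m. (i,m) \<notin> w'\<^sup>*}"
                by (auto intro: rtrancl_into_rtrancl)
              obtain z where z: "z \<in> Zset w'" "\<forall>v. 0 \<le> z v \<and> z v < 1"
                "\<forall>a b. a \<in> {m. (i,m) \<notin> w'\<^sup>*} \<and> b \<notin> {m. (i,m) \<notin> w'\<^sup>*} \<longrightarrow> z a < z b"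
                using rank_pt[OF sg ow acw dc] by blast
              have "z k < z i" using z(3) nik by auto
              moreover have "z i < z j" using K[OF z(1)] by simp
              moreover note cyc[OF ZC[OF z(1) z(2)]]
              ultimately show False by linarith
            qed
            have kj: "(k,j) \<in> w'\<^sup>*"
            proof (rule ccontr)
              assume nkj: "(k,j) \<notin> w'\<^sup>*"
              have dc: "\<forall>(a,b)\<in>w'. b \<in> {m. (m,j) \<in> w'\<^sup>*} \<longrightarrow> a \<in> {m. (m,j) \<in> w'\<^sup>*}"
                by (auto intro: converse_rtrancl_into_rtrancl)
              obtain z where z: "z \<in> Zset w'" "\<forall>v. 0 \<le> z v \<and> z v < 1"
                "\<forall>a b. a \<in> {m. (m,j) \<in> w'\<^sup>*} \<and> b \<notin> {m. (m,j) \<in> w'\<^sup>*} \<longrightarrow> z a < z b"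
                using rank_pt[OF sg ow acw dc] by blast
              have "z j < z k" using z(3) nkj by auto
              moreover have "z i < z j" using K[OF z(1)] by simp
              moreover note cyc[OF ZC[OF z(1) z(2)]]
              ultimately show False by linarith
            qed
            show ?thesis using k(1) ik kj unfolding poset_interval_def by auto
          qed
        qed
      qed
      then show ?thesis using wcl by blast
    qed
  qed
qed



lemma part2:
  "simple_graph 3 {{1,2},{2,3}} \<and> {(1,2),(2,3)} \<in> Acyc 3 {{1,2},{2,3}} \<and>
          poset_interval 3 {(1,2),(2,3)} 1 3 = {1,2,3} \<and>
          tor_interval 3 {{1,2},{2,3}} {(1,2),(2,3)} 1 3 = {}"
proof -
  define E :: "nat set set" where "E = {{1,2},{2,3}}"
  define w :: "(nat \<times> nat) set" where "w = {(1,2),(2,3)}"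
  have sg: "simple_graph 3 E"
    unfolding simple_graph_def E_def
  proof
    fix e :: "nat set" assume "e \<in> {{1,2},{2,3}}"
    then have "e = {1,2} \<or> e = {2,3}" by blast
    then show "\<exists>a b. a \<noteq> b \<and> a \<in> {1..3} \<and> b \<in> {1..3} \<and> e = {a, b}"
    proof
      assume "e = {1,2}" then show ?thesis by (intro exI[of _ 1] exI[of _ 2]) simp
    next
      assume "e = {2,3}" then show ?thesis by (intro exI[of _ 2] exI[of _ 3]) simp
    qed
  qed
  have Ee: "{a,b} \<in> E \<longleftrightarrow> (a = 1 \<and> b = 2) \<or> (a = 2 \<and> b = 1) \<or> (a = 2 \<and> b = 3) \<or> (a = 3 \<and> b = 2)" for a b :: nat
    unfolding E_def by (auto simp: doubleton_eq_iff)
  have o: "is_orientation 3 E w"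
  proof -
    have 1: "\<forall>(a,b)\<in>w. a \<noteq> b \<and> {a,b} \<in> E" unfolding w_def using Ee by auto
    have 2: "\<forall>a b. a \<noteq> b \<and> {a,b} \<in> E \<longrightarrow> ((a,b) \<in> w) = ((b,a) \<notin> w)"
    proof (intro allI impI)
      fix a b :: nat assume "a \<noteq> b \<and> {a,b} \<in> E"
      then have "(a = 1 \<and> b = 2) \<or> (a = 2 \<and> b = 1) \<or> (a = 2 \<and> b = 3) \<or> (a = 3 \<and> b = 2)" using Ee by blast
      then show "((a,b) \<in> w) = ((b,a) \<notin> w)" unfolding w_def by (elim disjE conjE; simp)
    qed
    show ?thesis unfolding is_orientation_def using 1 2 by (rule conjI)
  qed
  have ac: "acyclic w"
    by (rule acyclic_incr[of w "\<lambda>v. real v"]) (auto simp: w_def)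
  have A: "w \<in> Acyc 3 E" unfolding Acyc_def using o ac by blast
  have r12: "(1,2) \<in> w\<^sup>*" "(2,3) \<in> w\<^sup>*" unfolding w_def by auto
  have r13: "(1,3) \<in> w\<^sup>*" using r12 by (rule rtrancl_trans)
  have P: "poset_interval 3 w 1 3 = {1,2,3}"
  proof
    show "poset_interval 3 w 1 3 \<subseteq> {1,2,3}" unfolding poset_interval_def by auto
    show "{1,2,3} \<subseteq> poset_interval 3 w 1 3" unfolding poset_interval_def using r12 r13 by auto
  qed
  define x :: "nat \<Rightarrow> real" where "x = (\<lambda>v. if v = 2 then 3/4 else 1/2)"
  define w1 :: "(nat \<times> nat) set" where "w1 = {(2,3),(2,1)}"
  define w2 :: "(nat \<times> nat) set" where "w2 = {(1,2),(3,2)}"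
  have f1: "flip_step 3 w w1"
    unfolding flip_step_def
  proof (intro exI[of _ 1] conjI)
    show "is_source 3 w 1" unfolding is_source_def w_def by auto
    show "w1 = flip_at w 1" unfolding w1_def w_def flip_at_def by auto
  qed
  have f2: "flip_step 3 w1 w2"
    unfolding flip_step_def
  proof (intro exI[of _ 2] conjI)
    show "is_source 3 w1 2" unfolding is_source_def w1_def by auto
    show "w2 = flip_at w1 2" unfolding w1_def w2_def flip_at_def by auto
  qed
  have w2c: "w2 \<in> tor_class 3 w"
  proof -
    let ?R = "\<lambda>a b. flip_step 3 a b \<or> flip_step 3 b a"
    have "?R\<^sup>*\<^sup>* w w1" using f1 by (intro r_into_rtranclp) blast
    moreover have "?R w1 w2" using f2 by blast
    ultimately have "?R\<^sup>*\<^sup>* w w2" by (rule rtranclp.rtrancl_into_rtrancl)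
    then show ?thesis unfolding tor_class_def by simp
  qed
  have ix: "induced_orientation E x = w2"
  proof -
    have "induced_orientation E x = {(a,b). a \<noteq> b \<and> {a,b} \<in> E \<and> x a < x b}"
      unfolding induced_orientation_def by simp
    also have "\<dots> = w2"
    proof (rule set_eqI, clarify)
      fix a b :: nat
      show "((a,b) \<in> {(a,b). a \<noteq> b \<and> {a,b} \<in> E \<and> x a < x b}) = ((a,b) \<in> w2)"
        unfolding Ee w2_def x_def by auto
    qed
    finally show ?thesis .
  qed
  have xC: "x \<in> tor_chamber 3 E w"
    unfolding tor_chamber_def
  proof (intro CollectI conjI)
    show "\<forall>i\<in>{1..3}. 0 \<le> x i \<and> x i < 1" unfolding x_def by auto
    show "\<forall>a b. a \<noteq> b \<and> {a,b} \<in> E \<longrightarrow> x a \<noteq> x b"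
    proof (intro allI impI)
      fix a b :: nat assume "a \<noteq> b \<and> {a,b} \<in> E"
      then have "(a = 1 \<and> b = 2) \<or> (a = 2 \<and> b = 1) \<or> (a = 2 \<and> b = 3) \<or> (a = 3 \<and> b = 2)" using Ee by blast
      then show "x a \<noteq> x b" unfolding x_def by auto
    qed
    show "induced_orientation E x \<in> tor_class 3 w" using ix w2c by simp
  qed
  have ntc: "\<not> toric_chain 3 E w {1,3}"
  proof
    assume "toric_chain 3 E w {1,3}"
    then obtain cs where cs: "set cs = {1,3}" "restricts_to 3 E w cs" unfolding toric_chain_def by blast
    have "inj_on x {1,3}" using restricts_inj[OF cs(2) xC] cs(1) by simp
    moreover have "x 1 = x 3" unfolding x_def by simp
    ultimately show False unfolding inj_on_def by auto
  qed
  have T: "tor_interval 3 E w 1 3 = {}" unfolding tor_interval_def using ntc by simp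
  show ?thesis using sg A P T unfolding E_def w_def by blast
qed

theorem mainTheorem7:
  shows "(\<forall>n E \<omega> i j. simple_graph n E \<and> \<omega> \<in> Acyc n E \<and> i \<in> {1..n} \<and> j \<in> {1..n} \<longrightarrow>
            (\<exists>\<omega>'\<in>tor_class n \<omega>. poset_interval n \<omega>' i j = tor_interval n E \<omega> i j))
       \<and> (simple_graph 3 {{1,2},{2,3}} \<and> {(1,2),(2,3)} \<in> Acyc 3 {{1,2},{2,3}} \<and>
          poset_interval 3 {(1,2),(2,3)} 1 3 = {1,2,3} \<and>
          tor_interval 3 {{1,2},{2,3}} {(1,2),(2,3)} 1 3 = {})"
proof (rule conjI)
  show "\<forall>n E \<omega> i j. simple_graph n E \<and> \<omega> \<in> Acyc n E \<and> i \<in> {1..n} \<and> j \<in> {1..n} \<longrightarrow>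
            (\<exists>\<omega>'\<in>tor_class n \<omega>. poset_interval n \<omega>' i j = tor_interval n E \<omega> i j)"
  proof (intro allI impI)
    fix n E \<omega> i j assume h: "simple_graph n E \<and> \<omega> \<in> Acyc n E \<and> i \<in> {1..n} \<and> j \<in> {1..n}"
    show "\<exists>\<omega>'\<in>tor_class n \<omega>. poset_interval n \<omega>' i j = tor_interval n E \<omega> i j"
      using main1[of n E \<omega> i j] h by blast
  qed
  show "simple_graph 3 {{1,2},{2,3}} \<and> {(1,2),(2,3)} \<in> Acyc 3 {{1,2},{2,3}} \<and>
          poset_interval 3 {(1,2),(2,3)} 1 3 = {1,2,3} \<and>
          tor_interval 3 {{1,2},{2,3}} {(1,2),(2,3)} 1 3 = {}" by (rule part2)
qed

end
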